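(* Let $\mathrm{Fg}(K)$ be a function graph group with shifting action $\circ$ on $A\times B$, and let $Q\in K$. Then the standard complement $A_Q$ is a closed subgroup of $\mathrm{Fg}(K)$, and the orbits of $A_Q$ on $A\times B$ are exactly the level sets of the function $(x,y)\mapsto y-Q(x)$.
   Context: Let $A,B$ be finite abelian groups. The functions $A\to B$ form an abelian group under pointwise addition; for $t\in A$ the shift $a_t$ is $(a_tQ)(x)=Q(x-t)$. A function group is a subgroup $K$ of this group closed under all shifts. The function graph group $\mathrm{Fg}(K)=K\rtimes A$ has multiplication $(Q_1,t_1)(Q_2,t_2)=(Q_1+a_{t_1}Q_2,t_1+t_2)$ and acts on $A\times B$ by the shifting action $(Q,t)\circ(x,y)=(x+t,\,y+Q(x+t))$. For $Q\in K,t\in A$ put $a_{Q,t}=(Q-a_tQ,t)$ and $A_Q=\{a_{Q,t}:t\in A\}$ (a standard complement); $\mathcal{SC}=\{A_Q:Q\in K\}$. A subgroup $H$ is closed if every group element that maps each $H$-orbit onto itself lies in $H$. *)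

theory Defs
  imports "HOL-Algebra.Group"
begin

text \<open>A, B finite abelian groups are the types 'a and 'b. Functions A \<rightarrow> B form a group
  under pointwise addition.\<close>

definition shift :: "'a::ab_group_add \<Rightarrow> ('a \<Rightarrow> 'b) \<Rightarrow> ('a \<Rightarrow> 'b)" where
  "shift t Q = (\<lambda>x. Q (x - t))"

definition function_group ::
  "(('a::{finite,ab_group_add}) \<Rightarrow> ('b::{finite,ab_group_add})) set \<Rightarrow> bool" where
  "function_group K \<longleftrightarrow>
     (\<lambda>x. 0) \<in> K \<and>
     (\<forall>P\<in>K. \<forall>Q\<in>K. (\<lambda>x. P x + Q x) \<in> K) \<and>
     (\<forall>Q\<in>K. (\<lambda>x. - Q x) \<in> K) \<and>
     (\<forall>Q\<in>K. \<forall>t. shift t Q \<in> K)"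

definition Fg :: "(('a::{finite,ab_group_add}) \<Rightarrow> ('b::{finite,ab_group_add})) set
    \<Rightarrow> (('a \<Rightarrow> 'b) \<times> 'a) monoid" where
  "Fg K = \<lparr> carrier = K \<times> UNIV,
            mult = (\<lambda>(Q1, t1) (Q2, t2). ((\<lambda>x. Q1 x + shift t1 Q2 x), t1 + t2)),
            one = ((\<lambda>x. 0), 0) \<rparr>"

definition shift_act :: "(('a::ab_group_add) \<Rightarrow> ('b::ab_group_add)) \<times> 'a \<Rightarrow> 'a \<times> 'b \<Rightarrow> 'a \<times> 'b" where
  "shift_act g p = (case g of (Q, t) \<Rightarrow> case p of (x, y) \<Rightarrow> (x + t, y + Q (x + t)))"

definition orbit :: "((('a::ab_group_add) \<Rightarrow> ('b::ab_group_add)) \<times> 'a) set \<Rightarrow> 'a \<times> 'b \<Rightarrow> ('a \<times> 'b) set" where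
  "orbit H p = {shift_act h p | h. h \<in> H}"

definition aQ :: "(('a::ab_group_add) \<Rightarrow> ('b::ab_group_add)) \<Rightarrow> 'a \<Rightarrow> ('a \<Rightarrow> 'b) \<times> 'a" where
  "aQ Q t = ((\<lambda>x. Q x - shift t Q x), t)"

definition std_compl :: "(('a::ab_group_add) \<Rightarrow> ('b::ab_group_add)) \<Rightarrow> (('a \<Rightarrow> 'b) \<times> 'a) set" where
  "std_compl Q = {aQ Q t | t. True}"

definition closed_subgroup ::
  "(('a::{finite,ab_group_add}) \<Rightarrow> ('b::{finite,ab_group_add})) set \<Rightarrow> (('a \<Rightarrow> 'b) \<times> 'a) set \<Rightarrow> bool" where
  "closed_subgroup K H \<longleftrightarrow>
     (\<forall>g \<in> carrier (Fg K). (\<forall>p. shift_act g ` orbit H p = orbit H p) \<longrightarrow> g \<in> H)"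

end

theory Submission
  imports Defs
begin

lemma aQ_carrier:
  assumes "function_group K" "Q \<in> K"
  shows "aQ Q t \<in> carrier (Fg K)"
proof -
  have "shift t Q \<in> K" using assms by (simp add: function_group_def)
  hence "(\<lambda>x. - shift t Q x) \<in> K" using assms by (simp add: function_group_def)
  moreover have "\<And>P R. P \<in> K \<Longrightarrow> R \<in> K \<Longrightarrow> (\<lambda>x. P x + R x) \<in> K"
    using assms(1) unfolding function_group_def by blast
  ultimately have "(\<lambda>x. Q x + - shift t Q x) \<in> K" using assms(2) by blast
  hence "(\<lambda>x. Q x - shift t Q x) \<in> K" by (simp only: diff_conv_add_uminus)
  thus ?thesis by (simp add: aQ_def Fg_def)
qed

lemma aQ_mult: "aQ Q s \<otimes>\<^bsub>Fg K\<^esub> aQ Q t = aQ Q (s + t)"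
  by (simp add: aQ_def Fg_def shift_def fun_eq_iff algebra_simps)

lemma aQ_inv:
  assumes "function_group K" "Q \<in> K"
  shows "inv\<^bsub>Fg K\<^esub> (aQ Q t) = aQ Q (-t)"
  unfolding m_inv_def
proof (rule the_equality)
  show "aQ Q (-t) \<in> carrier (Fg K) \<and> aQ Q t \<otimes>\<^bsub>Fg K\<^esub> aQ Q (-t) = \<one>\<^bsub>Fg K\<^esub>
       \<and> aQ Q (-t) \<otimes>\<^bsub>Fg K\<^esub> aQ Q t = \<one>\<^bsub>Fg K\<^esub>"
    using aQ_carrier[OF assms] by (simp add: aQ_mult) (simp add: aQ_def Fg_def shift_def fun_eq_iff)
next
  fix y assume "y \<in> carrier (Fg K) \<and> aQ Q t \<otimes>\<^bsub>Fg K\<^esub> y = \<one>\<^bsub>Fg K\<^esub>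
       \<and> y \<otimes>\<^bsub>Fg K\<^esub> aQ Q t = \<one>\<^bsub>Fg K\<^esub>"
  then obtain P s where y: "y = (P, s)" and h: "(P, s) \<otimes>\<^bsub>Fg K\<^esub> aQ Q t = \<one>\<^bsub>Fg K\<^esub>"
    by (cases y) auto
  from h have st: "s = -t" by (simp add: aQ_def Fg_def eq_neg_iff_add_eq_0)
  from h have hp: "\<And>x. P x + (Q (x - s) - Q (x - s - t)) = 0"
    by (auto simp: aQ_def Fg_def shift_def fun_eq_iff algebra_simps)
  have "P = (\<lambda>x. Q x - Q (x + t))"
  proof
    fix x show "P x = Q x - Q (x + t)" using hp[of x] st
      by (simp add: algebra_simps eq_neg_iff_add_eq_0[symmetric])
  qed
  thus "y = aQ Q (-t)" using y st by (simp add: aQ_def shift_def)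
qed

lemma orbit_eq:
  "orbit (std_compl Q) (x, y) = {(x', y'). y' - Q x' = y - Q x}"
proof (rule equalityI; rule subsetI)
  fix p assume "p \<in> orbit (std_compl Q) (x, y)"
  then obtain t where "p = shift_act (aQ Q t) (x, y)"
    by (auto simp: orbit_def std_compl_def)
  thus "p \<in> {(x', y'). y' - Q x' = y - Q x}"
    by (simp add: shift_act_def aQ_def shift_def)
next
  fix p assume "p \<in> {(x', y'). y' - Q x' = y - Q x}"
  then obtain x' y' where p: "p = (x', y')" and e: "y' - Q x' = y - Q x" by auto
  have "shift_act (aQ Q (x' - x)) (x, y) = p"
    using e by (simp add: p shift_act_def aQ_def shift_def algebra_simps)
  thus "p \<in> orbit (std_compl Q) (x, y)"
    unfolding orbit_def std_compl_def by blast
qed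

theorem proposition6:
  fixes K :: "(('a::{finite,ab_group_add}) \<Rightarrow> ('b::{finite,ab_group_add})) set"
    and Q :: "'a \<Rightarrow> 'b"
  assumes "function_group K"
    and "Q \<in> K"
  shows "subgroup (std_compl Q) (Fg K)
       \<and> closed_subgroup K (std_compl Q)
       \<and> (\<forall>x y. orbit (std_compl Q) (x, y) = {(x', y'). y' - Q x' = y - Q x})"
proof (intro conjI allI orbit_eq)
  show "subgroup (std_compl Q) (Fg K)"
  proof
    show "std_compl Q \<subseteq> carrier (Fg K)"
      using aQ_carrier[OF assms] by (auto simp: std_compl_def)
    show "\<one>\<^bsub>Fg K\<^esub> \<in> std_compl Q"
    proof -
      have "\<one>\<^bsub>Fg K\<^esub> = aQ Q 0" by (simp add: Fg_def aQ_def shift_def)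
      thus ?thesis by (auto simp: std_compl_def)
    qed
    fix a b assume "a \<in> std_compl Q" "b \<in> std_compl Q"
    then show "a \<otimes>\<^bsub>Fg K\<^esub> b \<in> std_compl Q"
      by (auto simp: std_compl_def aQ_mult)
  next
    fix a assume "a \<in> std_compl Q"
    then show "inv\<^bsub>Fg K\<^esub> a \<in> std_compl Q"
      by (auto simp: std_compl_def aQ_inv[OF assms])
  qed
  show "closed_subgroup K (std_compl Q)"
    unfolding closed_subgroup_def
  proof (intro ballI impI)
    fix g assume "g \<in> carrier (Fg K)"
      and h: "\<forall>p. shift_act g ` orbit (std_compl Q) p = orbit (std_compl Q) p"
    obtain P s where g: "g = (P, s)" by (cases g)
    have "P = (\<lambda>z. Q z - shift s Q z)"
    proof
      fix z
      define x where "x = z - s"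
      have "(x, 0) \<in> orbit (std_compl Q) (x, 0)" by (simp add: orbit_eq)
      hence "shift_act g (x, 0) \<in> orbit (std_compl Q) (x, 0)" using h by blast
      thus "P z = Q z - shift s Q z"
        by (simp add: orbit_eq g shift_act_def x_def shift_def algebra_simps)
    qed
    thus "g \<in> std_compl Q" by (auto simp: g std_compl_def aQ_def)
  qed
qed

end
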